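(* Let $S=(G,P,\Lambda,I)$ be a completely simple semigroup with non-singular sandwich matrix $P$, and suppose the group $G$ is an equational domain in the group language $\mathcal{L}_G$. Then the set $M=\{(x,y)\in S^2\mid x=(1,1_G,1)\text{ or }y=(1,1_G,1)\}$ is algebraic over $S$ in the language $\mathcal{L}_S$.
   Context: Rees representation: a completely simple semigroup $S=(G,P,\Lambda,I)$ is given by a group $G$, index sets $\Lambda,I$ (each containing an element $1$), and a matrix $P=(p_{i\lambda})_{i\in I,\lambda\in\Lambda}$ over $G$ normalised so that $p_{1\lambda}=p_{i1}=1_G$; elements are triples $(\lambda,g,i)$ with product $(\lambda,g,i)(\mu,h,j)=(\lambda,gp_{i\mu}h,j)$ and inversion $(\lambda,g,i)^{-1}=(\lambda,p_{i\lambda}^{-1}g^{-1}p_{i\lambda}^{-1},i)$. $P$ is non-singular if it has no two equal rows and no two equal columns. The language $\mathcal{L}_S$ is $\{\cdot,{}^{-1}\}$ plus a constant for each element of $S$; the group language $\mathcal{L}_G$ is $\{\cdot,{}^{-1},1\}$ plus a constant for each element of $G$. A subset is algebraic if it is the solution set of a system of equations (equalities of terms) in the relevant language; a structure is an equational domain (e.d.) if every finite union of algebraic sets is algebraic. (Equivalently, a group $G$ is an e.d. in $\mathcal{L}_G$ iff it has no zero-divisors, where $x\ne1$ is a zero-divisor if there is $y\ne 1$ with $[x,gyg^{-1}]=1$ for all $g\in G$.) *)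

theory Defs
  imports "HOL-Algebra.Group"
begin

datatype 'c gterm = GVar nat | GConst 'c | GMul "'c gterm" "'c gterm" | GInv "'c gterm" | GOne

datatype 'c sterm = SVar nat | SConst 'c | SMul "'c sterm" "'c sterm" | SInv "'c sterm"

fun gvars :: "'c gterm \<Rightarrow> nat set" where
  "gvars (GVar k) = {k}"
| "gvars (GConst c) = {}"
| "gvars (GMul s t) = gvars s \<union> gvars t"
| "gvars (GInv s) = gvars s"
| "gvars GOne = {}"

fun gconsts :: "'c gterm \<Rightarrow> 'c set" where
  "gconsts (GVar k) = {}"
| "gconsts (GConst c) = {c}"
| "gconsts (GMul s t) = gconsts s \<union> gconsts t"
| "gconsts (GInv s) = gconsts s"
| "gconsts GOne = {}"

fun svars :: "'c sterm \<Rightarrow> nat set" where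
  "svars (SVar k) = {k}"
| "svars (SConst c) = {}"
| "svars (SMul s t) = svars s \<union> svars t"
| "svars (SInv s) = svars s"

fun sconsts :: "'c sterm \<Rightarrow> 'c set" where
  "sconsts (SVar k) = {}"
| "sconsts (SConst c) = {c}"
| "sconsts (SMul s t) = sconsts s \<union> sconsts t"
| "sconsts (SInv s) = sconsts s"

fun geval :: "('g, 'b) monoid_scheme \<Rightarrow> 'g list \<Rightarrow> 'g gterm \<Rightarrow> 'g" where
  "geval G xs (GVar k) = xs ! k"
| "geval G xs (GConst c) = c"
| "geval G xs (GMul s t) = geval G xs s \<otimes>\<^bsub>G\<^esub> geval G xs t"
| "geval G xs (GInv s) = inv\<^bsub>G\<^esub> (geval G xs s)"
| "geval G xs GOne = \<one>\<^bsub>G\<^esub>"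

definition group_algebraic :: "('g, 'b) monoid_scheme \<Rightarrow> nat \<Rightarrow> 'g list set \<Rightarrow> bool" where
  "group_algebraic G n X \<longleftrightarrow>
     (\<exists>E :: ('g gterm \<times> 'g gterm) set.
        (\<forall>(s, t)\<in>E. gvars s \<union> gvars t \<subseteq> {..<n} \<and> gconsts s \<union> gconsts t \<subseteq> carrier G) \<and>
        X = {xs. length xs = n \<and> set xs \<subseteq> carrier G \<and>
                 (\<forall>(s, t)\<in>E. geval G xs s = geval G xs t)})"

text \<open>Equational domain: every finite (non-empty) union of algebraic sets is algebraic;
  equivalently, the union of any two algebraic sets is algebraic.\<close>
definition group_equational_domain :: "('g, 'b) monoid_scheme \<Rightarrow> bool" where
  "group_equational_domain G \<longleftrightarrow>
     (\<forall>n X Y. group_algebraic G n X \<longrightarrow> group_algebraic G n Y \<longrightarrow> group_algebraic G n (X \<union> Y))"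

definition rees_carrier :: "'l set \<Rightarrow> ('g, 'b) monoid_scheme \<Rightarrow> 'i set \<Rightarrow> ('l \<times> 'g \<times> 'i) set" where
  "rees_carrier \<Lambda> G I = \<Lambda> \<times> carrier G \<times> I"

definition rees_mult :: "('g, 'b) monoid_scheme \<Rightarrow> ('i \<Rightarrow> 'l \<Rightarrow> 'g) \<Rightarrow>
    ('l \<times> 'g \<times> 'i) \<Rightarrow> ('l \<times> 'g \<times> 'i) \<Rightarrow> ('l \<times> 'g \<times> 'i)" where
  "rees_mult G P x y = (case x of (l, g, i) \<Rightarrow> case y of (m, h, j) \<Rightarrow>
      (l, g \<otimes>\<^bsub>G\<^esub> P i m \<otimes>\<^bsub>G\<^esub> h, j))"

definition rees_inv :: "('g, 'b) monoid_scheme \<Rightarrow> ('i \<Rightarrow> 'l \<Rightarrow> 'g) \<Rightarrow>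
    ('l \<times> 'g \<times> 'i) \<Rightarrow> ('l \<times> 'g \<times> 'i)" where
  "rees_inv G P x = (case x of (l, g, i) \<Rightarrow>
      (l, inv\<^bsub>G\<^esub> (P i l) \<otimes>\<^bsub>G\<^esub> inv\<^bsub>G\<^esub> g \<otimes>\<^bsub>G\<^esub> inv\<^bsub>G\<^esub> (P i l), i))"

text \<open>Sandwich matrix P = (p_{i lambda}) over G, normalised w.r.t. the distinguished indices
  i1 \<in> I and l1 \<in> Lambda (the elements called 1 in the paper).\<close>
definition rees_matrix :: "'l set \<Rightarrow> ('g, 'b) monoid_scheme \<Rightarrow> 'i set \<Rightarrow> ('i \<Rightarrow> 'l \<Rightarrow> 'g) \<Rightarrow> 'l \<Rightarrow> 'i \<Rightarrow> bool" where
  "rees_matrix \<Lambda> G I P l1 i1 \<longleftrightarrow> l1 \<in> \<Lambda> \<and> i1 \<in> I \<and>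
     (\<forall>i\<in>I. \<forall>l\<in>\<Lambda>. P i l \<in> carrier G) \<and>
     (\<forall>l\<in>\<Lambda>. P i1 l = \<one>\<^bsub>G\<^esub>) \<and> (\<forall>i\<in>I. P i l1 = \<one>\<^bsub>G\<^esub>)"

definition non_singular :: "'l set \<Rightarrow> 'i set \<Rightarrow> ('i \<Rightarrow> 'l \<Rightarrow> 'g) \<Rightarrow> bool" where
  "non_singular \<Lambda> I P \<longleftrightarrow>
     (\<forall>i\<in>I. \<forall>j\<in>I. i \<noteq> j \<longrightarrow> (\<exists>l\<in>\<Lambda>. P i l \<noteq> P j l)) \<and>
     (\<forall>l\<in>\<Lambda>. \<forall>m\<in>\<Lambda>. l \<noteq> m \<longrightarrow> (\<exists>i\<in>I. P i l \<noteq> P i m))"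

fun seval :: "('g, 'b) monoid_scheme \<Rightarrow> ('i \<Rightarrow> 'l \<Rightarrow> 'g) \<Rightarrow> ('l \<times> 'g \<times> 'i) list \<Rightarrow>
    ('l \<times> 'g \<times> 'i) sterm \<Rightarrow> ('l \<times> 'g \<times> 'i)" where
  "seval G P xs (SVar k) = xs ! k"
| "seval G P xs (SConst c) = c"
| "seval G P xs (SMul s t) = rees_mult G P (seval G P xs s) (seval G P xs t)"
| "seval G P xs (SInv s) = rees_inv G P (seval G P xs s)"

definition rees_algebraic :: "'l set \<Rightarrow> ('g, 'b) monoid_scheme \<Rightarrow> 'i set \<Rightarrow> ('i \<Rightarrow> 'l \<Rightarrow> 'g) \<Rightarrow>
    nat \<Rightarrow> ('l \<times> 'g \<times> 'i) list set \<Rightarrow> bool" where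
  "rees_algebraic \<Lambda> G I P n X \<longleftrightarrow>
     (\<exists>E :: (('l \<times> 'g \<times> 'i) sterm \<times> ('l \<times> 'g \<times> 'i) sterm) set.
        (\<forall>(s, t)\<in>E. svars s \<union> svars t \<subseteq> {..<n} \<and>
                     sconsts s \<union> sconsts t \<subseteq> rees_carrier \<Lambda> G I) \<and>
        X = {xs. length xs = n \<and> set xs \<subseteq> rees_carrier \<Lambda> G I \<and>
                 (\<forall>(s, t)\<in>E. seval G P xs s = seval G P xs t)})"

end

theory Submission
  imports Defs
begin

definition ext0 :: "'g monoid \<Rightarrow> 'l \<Rightarrow> 'i \<Rightarrow> nat \<Rightarrow> ('l \<times> 'g \<times> 'i) sterm" where
  "ext0 G l1 i1 k = SMul (SMul (SConst (l1,\<one>\<^bsub>G\<^esub>,i1)) (SVar k)) (SConst (l1,\<one>\<^bsub>G\<^esub>,i1))"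

fun ext :: "'g monoid \<Rightarrow> 'l \<Rightarrow> 'i \<Rightarrow> nat \<Rightarrow> ('i + 'l) option \<Rightarrow> ('l \<times> 'g \<times> 'i) sterm" where
  "ext G l1 i1 k None = ext0 G l1 i1 k"
| "ext G l1 i1 k (Some (Inl j)) = SMul (SMul (SMul (SConst (l1,\<one>\<^bsub>G\<^esub>,j)) (SVar k)) (SConst (l1,\<one>\<^bsub>G\<^esub>,i1))) (SInv (ext0 G l1 i1 k))"
| "ext G l1 i1 k (Some (Inr m)) = SMul (SInv (ext0 G l1 i1 k)) (SMul (SMul (SConst (l1,\<one>\<^bsub>G\<^esub>,i1)) (SVar k)) (SConst (m,\<one>\<^bsub>G\<^esub>,i1)))"

definition vl :: "('i \<Rightarrow> 'l \<Rightarrow> 'g) \<Rightarrow> ('l \<times> 'g \<times> 'i) \<Rightarrow> ('i + 'l) option \<Rightarrow> 'g" where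
  "vl P x w = (case x of (l, g, i) \<Rightarrow> (case w of None \<Rightarrow> g | Some (Inl j) \<Rightarrow> P j l | Some (Inr m) \<Rightarrow> P i m))"

definition Idx :: "'i set \<Rightarrow> 'l set \<Rightarrow> ('i + 'l) option set" where
  "Idx I L = insert None (Some ` (Inl ` I \<union> Inr ` L))"

lemma seval_ext:
  assumes G: "group G" and R: "rees_matrix \<Lambda> G I P l1 i1"
    and x: "xs ! k \<in> rees_carrier \<Lambda> G I" and w: "w \<in> Idx I \<Lambda>"
  shows "seval G P xs (ext G l1 i1 k w) = (l1, vl P (xs!k) w, i1) \<and> vl P (xs!k) w \<in> carrier G"
proof -
  interpret group G by fact
  obtain l g i where xk: "xs!k = (l,g,i)" and l: "l \<in> \<Lambda>" and g: "g \<in> carrier G" and i: "i \<in> I"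
    using x unfolding rees_carrier_def by auto
  have Pc: "\<And>j m. j \<in> I \<Longrightarrow> m \<in> \<Lambda> \<Longrightarrow> P j m \<in> carrier G"
    and P1: "\<And>m. m \<in> \<Lambda> \<Longrightarrow> P i1 m = \<one>\<^bsub>G\<^esub>" and P2: "\<And>j. j \<in> I \<Longrightarrow> P j l1 = \<one>\<^bsub>G\<^esub>"
    and l1: "l1 \<in> \<Lambda>" and i1: "i1 \<in> I"
    using R unfolding rees_matrix_def by auto
  have e0: "seval G P xs (ext0 G l1 i1 k) = (l1, g, i1)"
    unfolding ext0_def using xk g l i P1 P2 l1 i1 by (simp add: rees_mult_def)
  have e0i: "seval G P xs (SInv (ext0 G l1 i1 k)) = (l1, inv\<^bsub>G\<^esub> g, i1)"
    using e0 g P1 l1 by (simp add: rees_inv_def)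
  show ?thesis
  proof (cases w)
    case None then show ?thesis using e0 g xk by (simp add: vl_def)
  next
    case (Some a)
    show ?thesis
    proof (cases a)
      case (Inl j)
      with Some w have j: "j \<in> I" by (auto simp: Idx_def)
      show ?thesis using Some Inl e0i xk g j l i P1 P2 l1 i1 Pc[OF j l]
        by (simp add: rees_mult_def vl_def m_assoc)
    next
      case (Inr m)
      with Some w have m: "m \<in> \<Lambda>" by (auto simp: Idx_def)
      show ?thesis using Some Inr e0i xk g m l i P1 P2 l1 i1 Pc[OF i m]
        by (simp add: rees_mult_def vl_def m_assoc[symmetric])
    qed
  qed
qed

lemma vl_e:
  assumes G: "group G" and R: "rees_matrix \<Lambda> G I P l1 i1" and N: "non_singular \<Lambda> I P"
    and x: "x \<in> rees_carrier \<Lambda> G I"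
  shows "x = (l1, \<one>\<^bsub>G\<^esub>, i1) \<longleftrightarrow> (\<forall>w\<in>Idx I \<Lambda>. vl P x w = \<one>\<^bsub>G\<^esub>)"
proof -
  obtain l g i where xk: "x = (l,g,i)" and l: "l \<in> \<Lambda>" and g: "g \<in> carrier G" and i: "i \<in> I"
    using x unfolding rees_carrier_def by auto
  have P1: "\<And>m. m \<in> \<Lambda> \<Longrightarrow> P i1 m = \<one>\<^bsub>G\<^esub>" and P2: "\<And>j. j \<in> I \<Longrightarrow> P j l1 = \<one>\<^bsub>G\<^esub>"
    and l1: "l1 \<in> \<Lambda>" and i1: "i1 \<in> I"
    using R unfolding rees_matrix_def by auto
  show ?thesis
  proof
    assume "x = (l1, \<one>\<^bsub>G\<^esub>, i1)"
    then show "\<forall>w\<in>Idx I \<Lambda>. vl P x w = \<one>\<^bsub>G\<^esub>"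
      using P1 P2 by (auto simp: Idx_def vl_def)
  next
    assume A: "\<forall>w\<in>Idx I \<Lambda>. vl P x w = \<one>\<^bsub>G\<^esub>"
    have "g = \<one>\<^bsub>G\<^esub>" using A[rule_format, of None] xk by (simp add: Idx_def vl_def)
    moreover have "l = l1"
    proof (rule ccontr)
      assume "l \<noteq> l1"
      then obtain j where "j \<in> I" "P j l \<noteq> P j l1" using N l l1 unfolding non_singular_def by blast
      then show False using A[rule_format, of "Some (Inl j)"] xk P2 by (simp add: Idx_def vl_def)
    qed
    moreover have "i = i1"
    proof (rule ccontr)
      assume "i \<noteq> i1"
      then obtain m where "m \<in> \<Lambda>" "P i m \<noteq> P i1 m" using N i i1 unfolding non_singular_def by blast
      then show False using A[rule_format, of "Some (Inr m)"] xk P1 by (simp add: Idx_def vl_def)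
    qed
    ultimately show "x = (l1, \<one>\<^bsub>G\<^esub>, i1)" using xk by simp
  qed
qed

fun tr :: "'g monoid \<Rightarrow> 'l \<Rightarrow> 'i \<Rightarrow> ('l \<times> 'g \<times> 'i) sterm \<Rightarrow> ('l \<times> 'g \<times> 'i) sterm \<Rightarrow> 'g gterm \<Rightarrow> ('l \<times> 'g \<times> 'i) sterm" where
  "tr G l1 i1 a b (GVar k) = (if k = 0 then a else if k = 1 then b else SConst (l1,\<one>\<^bsub>G\<^esub>,i1))"
| "tr G l1 i1 a b (GConst c) = SConst (l1, c, i1)"
| "tr G l1 i1 a b (GMul s t) = SMul (tr G l1 i1 a b s) (tr G l1 i1 a b t)"
| "tr G l1 i1 a b (GInv s) = SInv (tr G l1 i1 a b s)"
| "tr G l1 i1 a b GOne = SConst (l1,\<one>\<^bsub>G\<^esub>,i1)"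

lemma seval_tr:
  assumes G: "group G" and R: "rees_matrix \<Lambda> G I P l1 i1"
    and a: "seval G P xs a = (l1, u, i1)" and b: "seval G P xs b = (l1, v, i1)"
    and u: "u \<in> carrier G" and v: "v \<in> carrier G"
  shows "gvars s \<subseteq> {..<2} \<Longrightarrow> gconsts s \<subseteq> carrier G \<Longrightarrow>
    seval G P xs (tr G l1 i1 a b s) = (l1, geval G [u,v] s, i1) \<and> geval G [u,v] s \<in> carrier G"
proof (induction s)
  case (GVar k)
  then show ?case using a b u v by (auto simp: less_2_cases_iff)
next
  case (GMul s t)
  interpret group G by fact
  have "P i1 l1 = \<one>\<^bsub>G\<^esub>" using R unfolding rees_matrix_def by auto
  with GMul show ?case by (auto simp: rees_mult_def)
next
  case (GInv s)
  interpret group G by fact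
  have "P i1 l1 = \<one>\<^bsub>G\<^esub>" using R unfolding rees_matrix_def by auto
  with GInv show ?case by (auto simp: rees_inv_def)
next
  case GOne
  interpret group G by fact
  show ?case by simp
qed auto

lemma svars_tr: "svars (tr G l1 i1 a b s) \<subseteq> svars a \<union> svars b"
  by (induction s) auto

lemma sconsts_tr: "sconsts (tr G l1 i1 a b s) \<subseteq> sconsts a \<union> sconsts b \<union> insert (l1,\<one>\<^bsub>G\<^esub>,i1) ((\<lambda>c. (l1,c,i1)) ` gconsts s)"
  by (induction s) auto

lemma svars_ext: "svars (ext G l1 i1 k w) \<subseteq> {k}"
  by (cases w rule: option.exhaust; (simp add: ext0_def)?; rename_tac a; case_tac a; simp add: ext0_def)

lemma sconsts_ext:
  assumes "group G" "rees_matrix \<Lambda> G I P l1 i1" "w \<in> Idx I \<Lambda>"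
  shows "sconsts (ext G l1 i1 k w) \<subseteq> rees_carrier \<Lambda> G I"
  using assms
  by (cases w rule: option.exhaust; auto simp: ext0_def rees_carrier_def rees_matrix_def Idx_def group.is_monoid)


lemma get_E:
  assumes G: "group G" and ed: "group_equational_domain G"
  obtains E where "\<forall>(s, t)\<in>E. gvars s \<union> gvars t \<subseteq> {..<2} \<and> gconsts s \<union> gconsts t \<subseteq> carrier G"
    and "\<And>u v. u \<in> carrier G \<Longrightarrow> v \<in> carrier G \<Longrightarrow>
      (\<forall>(s, t)\<in>E. geval G [u,v] s = geval G [u,v] t) \<longleftrightarrow> (u = \<one>\<^bsub>G\<^esub> \<or> v = \<one>\<^bsub>G\<^esub>)"
proof -
  let ?X = "{xs. length xs = 2 \<and> set xs \<subseteq> carrier G \<and> xs!0 = \<one>\<^bsub>G\<^esub>}"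
  let ?Y = "{xs. length xs = 2 \<and> set xs \<subseteq> carrier G \<and> xs!1 = \<one>\<^bsub>G\<^esub>}"
  have X: "group_algebraic G 2 ?X" unfolding group_algebraic_def
    by (rule exI[of _ "{(GVar 0, GOne)}"]) auto
  have Y: "group_algebraic G 2 ?Y" unfolding group_algebraic_def
    by (rule exI[of _ "{(GVar 1, GOne)}"]) auto
  from ed X Y have "group_algebraic G 2 (?X \<union> ?Y)" unfolding group_equational_domain_def by blast
  then obtain E where E1: "\<forall>(s, t)\<in>E. gvars s \<union> gvars t \<subseteq> {..<2} \<and> gconsts s \<union> gconsts t \<subseteq> carrier G"
    and E2: "?X \<union> ?Y = {xs. length xs = 2 \<and> set xs \<subseteq> carrier G \<and>
                 (\<forall>(s, t)\<in>E. geval G xs s = geval G xs t)}"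
    unfolding group_algebraic_def by blast
  show ?thesis
  proof (rule that[OF E1])
    fix u v assume u: "u \<in> carrier G" and v: "v \<in> carrier G"
    have "[u,v] \<in> ?X \<union> ?Y \<longleftrightarrow> (u = \<one>\<^bsub>G\<^esub> \<or> v = \<one>\<^bsub>G\<^esub>)" using u v by auto
    moreover have "[u,v] \<in> ?X \<union> ?Y \<longleftrightarrow> (\<forall>(s, t)\<in>E. geval G [u,v] s = geval G [u,v] t)"
      using u v by (subst E2) auto
    ultimately show "(\<forall>(s, t)\<in>E. geval G [u,v] s = geval G [u,v] t) \<longleftrightarrow> (u = \<one>\<^bsub>G\<^esub> \<or> v = \<one>\<^bsub>G\<^esub>)"
      by simp
  qed
qed

theorem mainTheorem6:
  fixes G :: "'g monoid" and P :: "'i \<Rightarrow> 'l \<Rightarrow> 'g"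
    and \<Lambda> :: "'l set" and I :: "'i set" and l1 :: 'l and i1 :: 'i
  assumes "group G"
    and "rees_matrix \<Lambda> G I P l1 i1"
    and "non_singular \<Lambda> I P"
    and "group_equational_domain G"
  shows "rees_algebraic \<Lambda> G I P 2
           {[x, y] | x y. x \<in> rees_carrier \<Lambda> G I \<and> y \<in> rees_carrier \<Lambda> G I \<and>
              (x = (l1, \<one>\<^bsub>G\<^esub>, i1) \<or> y = (l1, \<one>\<^bsub>G\<^esub>, i1))}"
proof -
  note G = assms(1) and R = assms(2) and N = assms(3)
  obtain E where E1: "\<forall>(s, t)\<in>E. gvars s \<union> gvars t \<subseteq> {..<2} \<and> gconsts s \<union> gconsts t \<subseteq> carrier G"
    and E2: "\<And>u v. u \<in> carrier G \<Longrightarrow> v \<in> carrier G \<Longrightarrow>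
      (\<forall>(s, t)\<in>E. geval G [u,v] s = geval G [u,v] t) \<longleftrightarrow> (u = \<one>\<^bsub>G\<^esub> \<or> v = \<one>\<^bsub>G\<^esub>)"
    using get_E[OF G assms(4)] by blast
  define ES where "ES = {(tr G l1 i1 (ext G l1 i1 0 a) (ext G l1 i1 (Suc 0) b) s,
                          tr G l1 i1 (ext G l1 i1 0 a) (ext G l1 i1 (Suc 0) b) t) | a b s t.
                          a \<in> Idx I \<Lambda> \<and> b \<in> Idx I \<Lambda> \<and> (s,t) \<in> E}"
  have one: "\<one>\<^bsub>G\<^esub> \<in> carrier G" using G by (simp add: group.is_monoid monoid.one_closed)
  have l1: "l1 \<in> \<Lambda>" and i1: "i1 \<in> I" using R unfolding rees_matrix_def by auto
  have C1: "\<forall>(s, t)\<in>ES. svars s \<union> svars t \<subseteq> {..<2} \<and> sconsts s \<union> sconsts t \<subseteq> rees_carrier \<Lambda> G I"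
  proof
    fix p assume "p \<in> ES"
    then obtain a b s t where p: "p = (tr G l1 i1 (ext G l1 i1 0 a) (ext G l1 i1 (Suc 0) b) s,
                          tr G l1 i1 (ext G l1 i1 0 a) (ext G l1 i1 (Suc 0) b) t)"
      and a: "a \<in> Idx I \<Lambda>" and b: "b \<in> Idx I \<Lambda>" and st: "(s,t) \<in> E"
      unfolding ES_def by blast
    let ?a = "ext G l1 i1 0 a" and ?b = "ext G l1 i1 (Suc 0) b"
    have va: "svars ?a \<union> svars ?b \<subseteq> {..<2}"
      using svars_ext[of G l1 i1 0 a] svars_ext[of G l1 i1 "Suc 0" b] by auto
    have ca: "sconsts ?a \<union> sconsts ?b \<subseteq> rees_carrier \<Lambda> G I"
      using sconsts_ext[OF G R a] sconsts_ext[OF G R b] by auto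
    have gc: "gconsts s \<subseteq> carrier G" "gconsts t \<subseteq> carrier G" using E1 st by auto
    have ec: "insert (l1,\<one>\<^bsub>G\<^esub>,i1) ((\<lambda>c. (l1,c,i1)) ` gconsts s) \<subseteq> rees_carrier \<Lambda> G I"
      "insert (l1,\<one>\<^bsub>G\<^esub>,i1) ((\<lambda>c. (l1,c,i1)) ` gconsts t) \<subseteq> rees_carrier \<Lambda> G I"
      using gc one l1 i1 by (auto simp: rees_carrier_def)
    have 1: "svars (tr G l1 i1 ?a ?b s) \<subseteq> {..<2}" "svars (tr G l1 i1 ?a ?b t) \<subseteq> {..<2}"
      using svars_tr[of G l1 i1 ?a ?b s] svars_tr[of G l1 i1 ?a ?b t] va by auto
    have 2: "sconsts (tr G l1 i1 ?a ?b s) \<subseteq> rees_carrier \<Lambda> G I"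
      by (rule order_trans[OF sconsts_tr]) (use ca ec in auto)
    have 3: "sconsts (tr G l1 i1 ?a ?b t) \<subseteq> rees_carrier \<Lambda> G I"
      by (rule order_trans[OF sconsts_tr]) (use ca ec in auto)
    show "case p of (s, t) \<Rightarrow> svars s \<union> svars t \<subseteq> {..<2} \<and> sconsts s \<union> sconsts t \<subseteq> rees_carrier \<Lambda> G I"
      unfolding p using 1 2 3 by simp
  qed
  have C2: "{[x, y] | x y. x \<in> rees_carrier \<Lambda> G I \<and> y \<in> rees_carrier \<Lambda> G I \<and>
              (x = (l1, \<one>\<^bsub>G\<^esub>, i1) \<or> y = (l1, \<one>\<^bsub>G\<^esub>, i1))} =
        {xs. length xs = 2 \<and> set xs \<subseteq> rees_carrier \<Lambda> G I \<and>
                 (\<forall>(s, t)\<in>ES. seval G P xs s = seval G P xs t)}"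
  proof (rule Set.set_eqI, rule iffI)
    fix xs
    { fix x y assume x: "x \<in> rees_carrier \<Lambda> G I" and y: "y \<in> rees_carrier \<Lambda> G I"
      have key: "(\<forall>(s, t)\<in>ES. seval G P [x,y] s = seval G P [x,y] t) \<longleftrightarrow>
          (\<forall>a\<in>Idx I \<Lambda>. \<forall>b\<in>Idx I \<Lambda>. vl P x a = \<one>\<^bsub>G\<^esub> \<or> vl P y b = \<one>\<^bsub>G\<^esub>)"
      proof -
        have "(\<forall>(s, t)\<in>ES. seval G P [x,y] s = seval G P [x,y] t) \<longleftrightarrow>
          (\<forall>a\<in>Idx I \<Lambda>. \<forall>b\<in>Idx I \<Lambda>. \<forall>(s,t)\<in>E.
             seval G P [x,y] (tr G l1 i1 (ext G l1 i1 0 a) (ext G l1 i1 (Suc 0) b) s) =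
             seval G P [x,y] (tr G l1 i1 (ext G l1 i1 0 a) (ext G l1 i1 (Suc 0) b) t))"
          unfolding ES_def by blast
        also have "\<dots> \<longleftrightarrow> (\<forall>a\<in>Idx I \<Lambda>. \<forall>b\<in>Idx I \<Lambda>. \<forall>(s,t)\<in>E.
             geval G [vl P x a, vl P y b] s = geval G [vl P x a, vl P y b] t)"
        proof -
          have step: "(seval G P [x,y] (tr G l1 i1 (ext G l1 i1 0 a) (ext G l1 i1 (Suc 0) b) s) =
             seval G P [x,y] (tr G l1 i1 (ext G l1 i1 0 a) (ext G l1 i1 (Suc 0) b) t)) =
             (geval G [vl P x a, vl P y b] s = geval G [vl P x a, vl P y b] t)"
            if a: "a \<in> Idx I \<Lambda>" and b: "b \<in> Idx I \<Lambda>" and st: "(s,t) \<in> E" for a b s t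
          proof -
            have ea: "seval G P [x,y] (ext G l1 i1 0 a) = (l1, vl P x a, i1)" "vl P x a \<in> carrier G"
              using seval_ext[OF G R _ a, of "[x,y]" 0] x by auto
            have eb: "seval G P [x,y] (ext G l1 i1 (Suc 0) b) = (l1, vl P y b, i1)" "vl P y b \<in> carrier G"
              using seval_ext[OF G R _ b, of "[x,y]" "Suc 0"] y by auto
            note T = seval_tr[OF G R ea(1) eb(1) ea(2) eb(2)]
            have "gvars s \<subseteq> {..<2}" "gconsts s \<subseteq> carrier G" "gvars t \<subseteq> {..<2}" "gconsts t \<subseteq> carrier G"
              using E1 st by auto
            then show ?thesis using T by simp
          qed
          show ?thesis
          proof (intro iffI ballI)
            fix a b p
            assume H: "\<forall>a\<in>Idx I \<Lambda>. \<forall>b\<in>Idx I \<Lambda>. \<forall>(s,t)\<in>E.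
             seval G P [x,y] (tr G l1 i1 (ext G l1 i1 0 a) (ext G l1 i1 (Suc 0) b) s) =
             seval G P [x,y] (tr G l1 i1 (ext G l1 i1 0 a) (ext G l1 i1 (Suc 0) b) t)"
              and a: "a \<in> Idx I \<Lambda>" and b: "b \<in> Idx I \<Lambda>" and p: "p \<in> E"
            obtain s t where pst: "p = (s,t)" by (cases p)
            have "seval G P [x,y] (tr G l1 i1 (ext G l1 i1 0 a) (ext G l1 i1 (Suc 0) b) s) =
             seval G P [x,y] (tr G l1 i1 (ext G l1 i1 0 a) (ext G l1 i1 (Suc 0) b) t)"
              using H a b p unfolding pst by fastforce
            then show "case p of (s,t) \<Rightarrow> geval G [vl P x a, vl P y b] s = geval G [vl P x a, vl P y b] t"
              using step[OF a b p[unfolded pst]] pst by simp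
          next
            fix a b p
            assume H: "\<forall>a\<in>Idx I \<Lambda>. \<forall>b\<in>Idx I \<Lambda>. \<forall>(s,t)\<in>E.
             geval G [vl P x a, vl P y b] s = geval G [vl P x a, vl P y b] t"
              and a: "a \<in> Idx I \<Lambda>" and b: "b \<in> Idx I \<Lambda>" and p: "p \<in> E"
            obtain s t where pst: "p = (s,t)" by (cases p)
            have "geval G [vl P x a, vl P y b] s = geval G [vl P x a, vl P y b] t"
              using H a b p unfolding pst by fastforce
            then show "case p of (s,t) \<Rightarrow> seval G P [x,y] (tr G l1 i1 (ext G l1 i1 0 a) (ext G l1 i1 (Suc 0) b) s) =
             seval G P [x,y] (tr G l1 i1 (ext G l1 i1 0 a) (ext G l1 i1 (Suc 0) b) t)"
              using step[OF a b p[unfolded pst]] pst by simp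
          qed
        qed
        also have "\<dots> \<longleftrightarrow> (\<forall>a\<in>Idx I \<Lambda>. \<forall>b\<in>Idx I \<Lambda>. vl P x a = \<one>\<^bsub>G\<^esub> \<or> vl P y b = \<one>\<^bsub>G\<^esub>)"
        proof -
          have step: "(\<forall>(s,t)\<in>E. geval G [vl P x a, vl P y b] s = geval G [vl P x a, vl P y b] t)
             \<longleftrightarrow> (vl P x a = \<one>\<^bsub>G\<^esub> \<or> vl P y b = \<one>\<^bsub>G\<^esub>)"
            if a: "a \<in> Idx I \<Lambda>" and b: "b \<in> Idx I \<Lambda>" for a b
          proof -
            have "vl P x a \<in> carrier G" using seval_ext[OF G R _ a, of "[x,y]" 0] x by auto
            moreover have "vl P y b \<in> carrier G" using seval_ext[OF G R _ b, of "[x,y]" "Suc 0"] y by auto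
            ultimately show ?thesis by (rule E2)
          qed
          show ?thesis using step by blast
        qed
        finally show ?thesis .
      qed
      also have "\<dots> \<longleftrightarrow> (x = (l1, \<one>\<^bsub>G\<^esub>, i1) \<or> y = (l1, \<one>\<^bsub>G\<^esub>, i1))"
        using vl_e[OF G R N x] vl_e[OF G R N y] by blast
      finally have "(\<forall>(s, t)\<in>ES. seval G P [x,y] s = seval G P [x,y] t) \<longleftrightarrow>
          (x = (l1, \<one>\<^bsub>G\<^esub>, i1) \<or> y = (l1, \<one>\<^bsub>G\<^esub>, i1))" .
    } note K = this
    show "xs \<in> {[x, y] | x y. x \<in> rees_carrier \<Lambda> G I \<and> y \<in> rees_carrier \<Lambda> G I \<and>
              (x = (l1, \<one>\<^bsub>G\<^esub>, i1) \<or> y = (l1, \<one>\<^bsub>G\<^esub>, i1))}" if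
      h: "xs \<in> {xs. length xs = 2 \<and> set xs \<subseteq> rees_carrier \<Lambda> G I \<and>
                 (\<forall>(s, t)\<in>ES. seval G P xs s = seval G P xs t)}"
    proof -
      from h obtain x y where xs: "xs = [x,y]" by (auto simp: length_Suc_conv numeral_2_eq_2)
      with h have x: "x \<in> rees_carrier \<Lambda> G I" and y: "y \<in> rees_carrier \<Lambda> G I"
        and e: "\<forall>(s, t)\<in>ES. seval G P [x,y] s = seval G P [x,y] t" by auto
      from K[OF x y] e have "x = (l1, \<one>\<^bsub>G\<^esub>, i1) \<or> y = (l1, \<one>\<^bsub>G\<^esub>, i1)" by blast
      with x y xs show ?thesis by blast
    qed
    show "xs \<in> {xs. length xs = 2 \<and> set xs \<subseteq> rees_carrier \<Lambda> G I \<and>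
                 (\<forall>(s, t)\<in>ES. seval G P xs s = seval G P xs t)}" if
      h: "xs \<in> {[x, y] | x y. x \<in> rees_carrier \<Lambda> G I \<and> y \<in> rees_carrier \<Lambda> G I \<and>
              (x = (l1, \<one>\<^bsub>G\<^esub>, i1) \<or> y = (l1, \<one>\<^bsub>G\<^esub>, i1))}"
    proof -
      from h obtain x y where xs: "xs = [x,y]" and x: "x \<in> rees_carrier \<Lambda> G I"
        and y: "y \<in> rees_carrier \<Lambda> G I" and d: "x = (l1, \<one>\<^bsub>G\<^esub>, i1) \<or> y = (l1, \<one>\<^bsub>G\<^esub>, i1)" by blast
      then show ?thesis using K[OF x y] by auto
    qed
  qed
  show ?thesis unfolding rees_algebraic_def using C1 C2 by blast
qed

end
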